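(* Let $M$ be a matroid with at least two bases and of rank at most $2$. Then $M$ has the Borsuk property.
   Context: All matroids are finite. For a matroid $M$, $\mathcal{B}(M)$ denotes its set of bases, and the distance between two bases $B,B'$ is $|B\triangle B'|$ (symmetric difference); $\operatorname{diam}$ denotes the diameter with respect to this distance. The Borsuk number $f(M)$ is the minimum number of parts in a partition of $\mathcal{B}(M)$ in which every part has diameter strictly smaller than $\operatorname{diam}(\mathcal{B}(M))$; if $M$ has exactly one basis, $f(M):=+\infty$. If $M$ has $n$ elements and $c$ connected components, $M$ has the Borsuk property if $f(M)\le n-c+1$. *)

theory Defs
  imports Main "HOL-Library.Disjoint_Sets" "HOL-Library.Extended_Nat"
begin

definition matroid :: "'a set \<Rightarrow> 'a set set \<Rightarrow> bool" where
  "matroid E Bs \<longleftrightarrow> finite E \<and> Bs \<noteq> {} \<and> (\<forall>B\<in>Bs. B \<subseteq> E) \<and>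
     (\<forall>B1\<in>Bs. \<forall>B2\<in>Bs. \<forall>x\<in>B1 - B2. \<exists>y\<in>B2 - B1. insert y (B1 - {x}) \<in> Bs)"

definition indep :: "'a set set \<Rightarrow> 'a set \<Rightarrow> bool" where
  "indep Bs I \<longleftrightarrow> (\<exists>B\<in>Bs. I \<subseteq> B)"

definition circuit :: "'a set \<Rightarrow> 'a set set \<Rightarrow> 'a set \<Rightarrow> bool" where
  "circuit E Bs C \<longleftrightarrow> C \<subseteq> E \<and> \<not> indep Bs C \<and> (\<forall>D. D \<subset> C \<longrightarrow> indep Bs D)"

text \<open>Rank: the common cardinality of the bases.\<close>
definition rank :: "'a set set \<Rightarrow> nat" where
  "rank Bs = card (SOME B. B \<in> Bs)"

definition conn_rel :: "'a set \<Rightarrow> 'a set set \<Rightarrow> ('a \<times> 'a) set" where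
  "conn_rel E Bs = {(x, y). x \<in> E \<and> y \<in> E \<and> (x = y \<or> (\<exists>C. circuit E Bs C \<and> x \<in> C \<and> y \<in> C))}"

definition num_components :: "'a set \<Rightarrow> 'a set set \<Rightarrow> nat" where
  "num_components E Bs = card (E // conn_rel E Bs)"

definition basis_dist :: "'a set \<Rightarrow> 'a set \<Rightarrow> nat" where
  "basis_dist A B = card ((A - B) \<union> (B - A))"

definition diam :: "'a set set \<Rightarrow> nat" where
  "diam S = Max {basis_dist A B | A B. A \<in> S \<and> B \<in> S}"

definition borsuk_number :: "'a set set \<Rightarrow> enat" where
  "borsuk_number Bs = (if card Bs = 1 then \<infinity> else
     enat (LEAST k. \<exists>P. partition_on Bs P \<and> card P = k \<and> (\<forall>S\<in>P. diam S < diam Bs)))"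

definition borsuk_property :: "'a set \<Rightarrow> 'a set set \<Rightarrow> bool" where
  "borsuk_property E Bs \<longleftrightarrow>
     borsuk_number Bs \<le> enat (card E - num_components E Bs + 1)"

end

theory Submission
  imports Defs
begin

lemma comp_bound:
  assumes "finite E" "A \<subseteq> E" "A \<noteq> {}" "\<forall>x\<in>A. conn_rel E Bs `` {x} = A"
  shows "num_components E Bs \<le> card (E - A) + 1"
proof -
  let ?f = "\<lambda>x. conn_rel E Bs `` {x}"
  have "E // conn_rel E Bs = ?f ` E" by (auto simp: quotient_def)
  also have "\<dots> = ?f ` A \<union> ?f ` (E - A)" using assms(2) by auto
  also have "?f ` A = {A}" using assms(3,4) by auto
  finally have eq: "E // conn_rel E Bs = {A} \<union> ?f ` (E - A)" .
  have "card ({A} \<union> ?f ` (E-A)) \<le> card {A} + card (?f ` (E-A))" by (rule card_Un_le)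
  also have "\<dots> \<le> 1 + card (E-A)" using card_image_le[of "E - A" ?f] assms(1) by simp
  finally show ?thesis unfolding num_components_def eq by simp
qed

lemma borsuk_from:
  assumes "finite E" "card Bs \<ge> 2" "A \<subseteq> E" "A \<noteq> {}" "\<forall>x\<in>A. conn_rel E Bs `` {x} = A"
    "partition_on Bs P" "card P \<le> card A" "\<forall>S\<in>P. diam S < diam Bs"
  shows "borsuk_property E Bs"
proof -
  have c: "num_components E Bs \<le> card (E-A) + 1" by (rule comp_bound[OF assms(1) assms(3-5)])
  have fA: "finite A" using assms(1,3) by (rule finite_subset[rotated])
  have "card (E - A) = card E - card A" by (rule card_Diff_subset[OF fA assms(3)])
  moreover have "card A \<le> card E" by (rule card_mono[OF assms(1,3)])
  ultimately have le: "card A \<le> card E - num_components E Bs + 1" using c by linarith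
  have ex: "\<exists>Q. partition_on Bs Q \<and> card Q = card P \<and> (\<forall>S\<in>Q. diam S < diam Bs)"
    using assms(6,8) by blast
  have "(LEAST k. \<exists>P. partition_on Bs P \<and> card P = k \<and> (\<forall>S\<in>P. diam S < diam Bs)) \<le> card P"
    by (rule Least_le) (rule ex)
  hence L: "(LEAST k. \<exists>P. partition_on Bs P \<and> card P = k \<and> (\<forall>S\<in>P. diam S < diam Bs))
     \<le> card E - num_components E Bs + 1" using le assms(7) by linarith
  have "card Bs \<noteq> 1" using assms(2) by simp
  thus ?thesis using L unfolding borsuk_property_def borsuk_number_def by simp
qed

lemma bases_card:
  assumes m: "matroid E Bs"
  shows "B1 \<in> Bs \<Longrightarrow> B2 \<in> Bs \<Longrightarrow> card B1 = card B2"
proof (induction "card (B1 - B2)" arbitrary: B1 rule: less_induct)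
  case less
  have fin: "finite B1" "finite B2" using m less.prems unfolding matroid_def
    by (meson finite_subset)+
  show ?case
  proof (cases "B1 - B2 = {}")
    case True
    have "B2 - B1 = {}"
    proof (rule ccontr)
      assume "B2 - B1 \<noteq> {}" then obtain x where "x \<in> B2 - B1" by blast
      with m less.prems obtain y where "y \<in> B1 - B2" unfolding matroid_def by blast
      with True show False by blast
    qed
    with True have "B1 = B2" by blast
    thus ?thesis by simp
  next
    case False
    then obtain x where x: "x \<in> B1 - B2" by blast
    with m less.prems obtain y where y: "y \<in> B2 - B1" and B: "insert y (B1 - {x}) \<in> Bs"
      unfolding matroid_def by blast
    let ?B = "insert y (B1 - {x})"
    have "?B - B2 = (B1 - B2) - {x}" using x y by auto
    moreover have "card ((B1 - B2) - {x}) < card (B1 - B2)" by (rule card_Diff1_less) (use x fin in auto)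
    ultimately have "card (?B - B2) < card (B1 - B2)" by simp
    from less.hyps[OF this B less.prems(2)] have "card ?B = card B2" .
    moreover have "card ?B = card B1" using x y fin
      by (simp add: card_Diff_singleton) (metis card_0_eq empty_iff Suc_pred neq0_conv x DiffD1)
    ultimately show ?thesis by simp
  qed
qed

lemma rank_card:
  assumes "matroid E Bs" "B \<in> Bs" shows "card B = rank Bs"
  unfolding rank_def using bases_card[OF assms(1) assms(2)] someI[of "\<lambda>B. B \<in> Bs", OF assms(2)]
  by simp

lemma indep_mono: "indep Bs I \<Longrightarrow> J \<subseteq> I \<Longrightarrow> indep Bs J"
  unfolding indep_def by blast

lemma circuit_intro:
  assumes "C \<subseteq> E" "\<not> indep Bs C" "\<And>c. c \<in> C \<Longrightarrow> indep Bs (C - {c})"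
  shows "circuit E Bs C"
  unfolding circuit_def
proof (intro conjI allI impI assms(1,2))
  fix D assume "D \<subset> C"
  then obtain c where "c \<in> C" "D \<subseteq> C - {c}" by blast
  thus "indep Bs D" using assms(3) indep_mono by blast
qed

lemma loop_circuit:
  assumes "circuit E Bs C" "l \<in> C" "l \<notin> \<Union>Bs" shows "C = {l}"
proof (rule ccontr)
  assume "C \<noteq> {l}"
  hence "{l} \<subset> C" using assms(2) by blast
  hence "indep Bs {l}" using assms(1) unfolding circuit_def by blast
  thus False using assms(3) unfolding indep_def by blast
qed

lemma conn_sub:
  assumes "x \<in> \<Union>Bs" shows "conn_rel E Bs `` {x} \<subseteq> \<Union>Bs"
proof
  fix z assume "z \<in> conn_rel E Bs `` {x}"
  hence "z = x \<or> (\<exists>C. circuit E Bs C \<and> x \<in> C \<and> z \<in> C)" unfolding conn_rel_def by auto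
  thus "z \<in> \<Union>Bs"
  proof
    assume "\<exists>C. circuit E Bs C \<and> x \<in> C \<and> z \<in> C"
    then obtain C where C: "circuit E Bs C" "x \<in> C" "z \<in> C" by blast
    show "z \<in> \<Union>Bs"
    proof (rule ccontr)
      assume "z \<notin> \<Union>Bs"
      hence "C = {z}" by (rule loop_circuit[OF C(1) C(3)])
      hence "x = z" using C(2) by simp
      thus False using assms \<open>z \<notin> \<Union>Bs\<close> by simp
    qed
  qed (use assms in simp)
qed

lemma conn_circ:
  assumes "circuit E Bs C" "x \<in> C" "y \<in> C" shows "(x, y) \<in> conn_rel E Bs"
proof -
  have "C \<subseteq> E" using assms(1) unfolding circuit_def by simp
  hence "x \<in> E" "y \<in> E" using assms(2,3) by auto
  thus ?thesis unfolding conn_rel_def using assms by blast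
qed

lemma conn_refl: "x \<in> E \<Longrightarrow> (x, x) \<in> conn_rel E Bs"
  unfolding conn_rel_def by blast

lemma dist_set_eq: "{basis_dist A B |A B. A \<in> S \<and> B \<in> S} = (\<lambda>(A,B). basis_dist A B) ` (S \<times> S)"
  by auto

lemma diam_ge: "finite S \<Longrightarrow> A \<in> S \<Longrightarrow> B \<in> S \<Longrightarrow> basis_dist A B \<le> diam S"
  unfolding diam_def dist_set_eq by (rule Max_ge) auto

lemma diam_le: "finite S \<Longrightarrow> S \<noteq> {} \<Longrightarrow> (\<And>A B. A \<in> S \<Longrightarrow> B \<in> S \<Longrightarrow> basis_dist A B \<le> k) \<Longrightarrow> diam S \<le> k"
  unfolding diam_def dist_set_eq by (subst Max_le_iff) auto

lemma single_part:
  assumes "finite Bs" "B1 \<in> Bs" "B2 \<in> Bs" "B1 \<noteq> B2" "finite B1" "finite B2"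
  shows "\<exists>P. partition_on Bs P \<and> card P = card Bs \<and> (\<forall>S\<in>P. diam S < diam Bs)"
proof (intro exI conjI)
  show "partition_on Bs ((\<lambda>x. {x}) ` Bs)" by (rule partition_on_singletons)
  show "card ((\<lambda>x. {x}) ` Bs) = card Bs" by (rule card_image) (auto simp: inj_on_def)
  have "(B1 - B2) \<union> (B2 - B1) \<noteq> {}" using assms(4) by blast
  moreover have "finite ((B1 - B2) \<union> (B2 - B1))" using assms(5,6) by simp
  ultimately have "basis_dist B1 B2 > 0" unfolding basis_dist_def using card_gt_0_iff by blast
  hence pos: "diam Bs > 0" using diam_ge[OF assms(1-3)] by linarith
  show "\<forall>S\<in>(\<lambda>x. {x}) ` Bs. diam S < diam Bs"
  proof
    fix S assume "S \<in> (\<lambda>x. {x}) ` Bs"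
    then obtain B where "S = {B}" by blast
    have "diam S \<le> 0" unfolding \<open>S = {B}\<close> by (rule diam_le) (auto simp: basis_dist_def)
    thus "diam S < diam Bs" using pos by simp
  qed
qed

lemma star_part:
  assumes "finite Bs" "finite T" "\<forall>B\<in>Bs. card B = 2" "\<forall>B\<in>Bs. B \<inter> T \<noteq> {}"
    "B1 \<in> Bs" "B2 \<in> Bs" "B1 \<inter> B2 = {}"
  shows "\<exists>P. partition_on Bs P \<and> card P \<le> card T \<and> (\<forall>S\<in>P. diam S < diam Bs)"
proof -
  define g where "g B = (SOME t. t \<in> B \<inter> T)" for B
  have g: "g B \<in> B \<inter> T" if "B \<in> Bs" for B
  proof -
    from assms(4) that obtain t where "t \<in> B \<inter> T" by blast
    thus ?thesis unfolding g_def by (rule someI)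
  qed
  define P where "P = (\<lambda>t. {B\<in>Bs. g B = t}) ` (g ` Bs)"
  have part: "partition_on Bs P"
  proof (rule partition_onI)
    show "\<Union>P = Bs" unfolding P_def by auto
    show "{} \<notin> P" unfolding P_def by auto
    fix p q assume "p \<in> P" "q \<in> P" "p \<noteq> q"
    thus "disjnt p q" unfolding P_def disjnt_def by auto
  qed
  have "card P \<le> card (g ` Bs)" unfolding P_def by (rule card_image_le) (use assms(1) in simp)
  also have "\<dots> \<le> card T" by (rule card_mono) (use assms(2) g in auto)
  finally have cP: "card P \<le> card T" .
  have fin2: "finite B" if "B \<in> Bs" for B
  proof -
    have "card B = 2" using assms(3) that by blast
    thus ?thesis using card_ge_0_finite[of B] by simp
  qed
  have "B1 - B2 = B1" "B2 - B1 = B2" using assms(7) by blast+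
  hence "basis_dist B1 B2 = card (B1 \<union> B2)" unfolding basis_dist_def by simp
  also have "\<dots> = 4" using assms(3,5,6,7) fin2 assms(5,6) by (simp add: card_Un_disjoint)
  finally have d4: "4 \<le> diam Bs" using diam_ge[OF assms(1,5,6)] by simp
  have "diam S < diam Bs" if "S \<in> P" for S
  proof -
    obtain t where S: "S = {B\<in>Bs. g B = t}" "S \<noteq> {}" using \<open>S \<in> P\<close> unfolding P_def by auto
    have "diam S \<le> 2"
    proof (rule diam_le)
      show "finite S" using S assms(1) by simp
      show "S \<noteq> {}" by fact
      fix A B assume AB: "A \<in> S" "B \<in> S"
      hence tA0: "A \<in> Bs" "B \<in> Bs" "g A = t" "g B = t" using S(1) by auto
      have tA: "t \<in> A" "t \<in> B" "A \<in> Bs" "B \<in> Bs" using g[OF tA0(1)] g[OF tA0(2)] tA0 by simp_all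
      have "card (A - B) \<le> card (A - {t})" by (rule card_mono) (use tA fin2 in auto)
      also have "\<dots> = 1" using tA assms(3) fin2 by simp
      finally have 1: "card (A - B) \<le> 1" .
      have "card (B - A) \<le> card (B - {t})" by (rule card_mono) (use tA fin2 in auto)
      also have "\<dots> = 1" using tA assms(3) fin2 by simp
      finally have 2: "card (B - A) \<le> 1" .
      have "basis_dist A B \<le> card (A - B) + card (B - A)" unfolding basis_dist_def by (rule card_Un_le)
      thus "basis_dist A B \<le> 2" using 1 2 by linarith
    qed
    thus ?thesis using d4 by linarith
  qed
  hence all: "\<forall>S\<in>P. diam S < diam Bs" by blast
  show ?thesis by (rule exI[of _ P]) (simp add: part cP all)
qed

lemma two_elems:
  assumes "2 \<le> card S" obtains x y where "x \<in> S" "y \<in> S" "x \<noteq> y"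
proof -
  have "\<exists>x y. x \<in> S \<and> y \<in> S \<and> x \<noteq> y"
  proof (rule ccontr)
    assume "\<not> ?thesis"
    hence "S \<subseteq> {SOME x. x \<in> S}" by (metis (mono_tags, lifting) singletonI some_eq_imp subsetI)
    hence "card S \<le> card {SOME x. x \<in> S}" by (rule card_mono[rotated]) simp
    thus False using assms by simp
  qed
  thus ?thesis using that by blast
qed

lemma card3_le: "card {a, b, c} \<le> 3"
  by (simp add: card_insert_if)

lemma tri_sets: assumes "u \<in> {p,q,r}" "v \<in> {p,q,r}" "u \<noteq> v" shows "{u,v} \<in> {{p,q},{q,r},{p,r}}"
  using assms by (auto simp: insert_commute)

lemma tri_in: assumes "{u,v} \<inter> {p,q} \<noteq> {}" "{u,v} \<inter> {q,r} \<noteq> {}" "{u,v} \<inter> {p,r} \<noteq> {}"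
  "p \<noteq> q" "q \<noteq> r" "p \<noteq> r" shows "u \<in> {p,q,r}"
  using assms by auto

lemma rank1_case:
  assumes m: "matroid E Bs" and one: "\<forall>B\<in>Bs. card B = 1" and c2: "card Bs \<ge> 2"
  shows "borsuk_property E Bs"
proof -
  have finE: "finite E" and subE: "\<And>B. B \<in> Bs \<Longrightarrow> B \<subseteq> E" using m unfolding matroid_def by auto
  have finB: "\<And>B. B \<in> Bs \<Longrightarrow> finite B" using subE finE finite_subset by blast
  have finBs: "finite Bs" using finE subE by (meson PowI finite_Pow_iff finite_subset subsetI)
  let ?N = "\<Union>Bs"
  have NE: "?N \<subseteq> E" using subE by blast
  have finN: "finite ?N" using NE finE finite_subset by blast
  have uni: "\<forall>x\<in>?N. conn_rel E Bs `` {x} = ?N"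
  proof
    fix x assume x: "x \<in> ?N"
    show "conn_rel E Bs `` {x} = ?N"
    proof
      show "conn_rel E Bs `` {x} \<subseteq> ?N" by (rule conn_sub[OF x])
      show "?N \<subseteq> conn_rel E Bs `` {x}"
      proof
        fix y assume y: "y \<in> ?N"
        show "y \<in> conn_rel E Bs `` {x}"
        proof (cases "y = x")
          case True
          have "x \<in> E" using x NE by blast
          thus ?thesis using conn_refl[of x E Bs] True by simp
        next
          case False
          have "circuit E Bs {x, y}"
          proof (rule circuit_intro)
            show "{x, y} \<subseteq> E" using x y NE by blast
            show "\<not> indep Bs {x, y}"
            proof
              assume "indep Bs {x, y}"
              then obtain B where B: "B \<in> Bs" "{x, y} \<subseteq> B" unfolding indep_def by blast
              have "card {x, y} \<le> card B" using B finB card_mono by blast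
              thus False using B one False by simp
            qed
            fix c assume "c \<in> {x, y}"
            hence "{x, y} - {c} \<subseteq> {x} \<or> {x, y} - {c} \<subseteq> {y}" by auto
            moreover have "indep Bs {x}" "indep Bs {y}" using x y unfolding indep_def by auto
            ultimately show "indep Bs ({x, y} - {c})"
              by (elim disjE) (erule indep_mono[rotated], assumption)+
          qed
          hence "(x, y) \<in> conn_rel E Bs" by (rule conn_circ) simp_all
          thus ?thesis by simp
        qed
      qed
    qed
  qed
  have "Bs \<subseteq> (\<lambda>x. {x}) ` ?N"
  proof
    fix B assume B: "B \<in> Bs"
    then obtain x where "B = {x}" using one card_1_singletonE by blast
    thus "B \<in> (\<lambda>x. {x}) ` ?N" using B by blast
  qed
  hence "card Bs \<le> card ((\<lambda>x. {x}) ` ?N)" by (rule card_mono[rotated]) (use finN in simp)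
  hence cB: "card Bs \<le> card ?N" using card_image_le[OF finN, of "\<lambda>x. {x}"] by linarith
  obtain B1 B2 where B12: "B1 \<in> Bs" "B2 \<in> Bs" "B1 \<noteq> B2" using two_elems[OF c2] by blast
  obtain P where P: "partition_on Bs P" "card P = card Bs" "\<forall>S\<in>P. diam S < diam Bs"
    using single_part[OF finBs B12 finB finB] B12 by blast
  have "?N \<noteq> {}" using B12 one by fastforce
  show ?thesis by (rule borsuk_from[OF finE c2 NE \<open>?N \<noteq> {}\<close> uni P(1) _ P(3)]) (use P cB in simp)
qed

locale rk2 =
  fixes E :: "'a set" and Bs :: "'a set set"
  assumes mat: "matroid E Bs" and two: "\<And>B. B \<in> Bs \<Longrightarrow> card B = 2"
begin

lemma finE: "finite E" using mat matroid_def by auto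
lemma subE: "B \<in> Bs \<Longrightarrow> B \<subseteq> E" using mat unfolding matroid_def by blast
lemma finBs: "finite Bs" using finE subE by (meson PowI finite_Pow_iff finite_subset subsetI)
lemma exch: "B1 \<in> Bs \<Longrightarrow> B2 \<in> Bs \<Longrightarrow> x \<in> B1 - B2 \<Longrightarrow> \<exists>y\<in>B2 - B1. insert y (B1 - {x}) \<in> Bs"
  using mat unfolding matroid_def by blast
lemma NE: "\<Union>Bs \<subseteq> E" using subE by blast
lemma finN: "finite (\<Union>Bs)" using NE finE finite_subset by blast
lemma finB: "B \<in> Bs \<Longrightarrow> finite B" using two card_ge_0_finite by force

lemma base_pair: "B \<in> Bs \<Longrightarrow> \<exists>x y. x \<noteq> y \<and> B = {x, y}"
  using two card_2_iff by metis

lemma base_ne: "{x, y} \<in> Bs \<Longrightarrow> x \<noteq> y"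
  using two by fastforce

lemma indep_pair:
  assumes "x \<noteq> y" shows "indep Bs {x, y} \<longleftrightarrow> {x, y} \<in> Bs"
proof
  assume "indep Bs {x, y}"
  then obtain B where B: "B \<in> Bs" "{x, y} \<subseteq> B" unfolding indep_def by blast
  have "{x, y} = B" by (rule card_subset_eq) (use B two assms finB in auto)
  thus "{x, y} \<in> Bs" using B by simp
qed (auto simp: indep_def)

lemma indep_single: "x \<in> \<Union>Bs \<Longrightarrow> indep Bs {x}" unfolding indep_def by blast

definition par where "par x y \<longleftrightarrow> x \<in> \<Union>Bs \<and> y \<in> \<Union>Bs \<and> {x, y} \<notin> Bs"

lemma par_sym: "par x y \<Longrightarrow> par y x" by (auto simp: par_def insert_commute)

lemma par_refl: "x \<in> \<Union>Bs \<Longrightarrow> par x x" using two by (force simp: par_def)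

lemma par_trans:
  assumes "par x y" "par y z" shows "par x z"
proof (rule ccontr)
  assume "\<not> par x z"
  hence xz: "{x, z} \<in> Bs" using assms by (auto simp: par_def)
  obtain B0 where B0: "B0 \<in> Bs" "y \<in> B0" using assms par_def by auto
  obtain p q where pq: "p \<noteq> q" "B0 = {p, q}" using base_pair[OF B0(1)] by blast
  have "\<exists>w. w \<noteq> y \<and> B0 = {y, w}"
  proof (cases "y = p")
    case True thus ?thesis using pq by auto
  next
    case False
    hence "y = q" using pq B0(2) by blast
    thus ?thesis using pq by (auto simp: insert_commute)
  qed
  then obtain w where w: "w \<noteq> y" "B0 = {y, w}" by blast
  have "w \<noteq> x" using assms(1) w B0 by (auto simp: par_def insert_commute)
  moreover have "w \<noteq> z" using assms(2) w B0 by (auto simp: par_def insert_commute)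
  ultimately obtain u where u: "u \<in> {x, z} - B0" "insert u (B0 - {w}) \<in> Bs"
    using exch[OF B0(1) xz, of w] w by auto
  have "B0 - {w} = {y}" using w by auto
  hence "{u, y} \<in> Bs" using u by simp
  thus False using u assms by (auto simp: par_def insert_commute)
qed

lemma par_common: "par x s \<Longrightarrow> par x t \<Longrightarrow> par s t"
  by (rule par_trans[OF par_sym])

lemma nonpar: "x \<in> \<Union>Bs \<Longrightarrow> y \<in> \<Union>Bs \<Longrightarrow> \<not> par x y \<Longrightarrow> {x, y} \<in> Bs" by (simp add: par_def)

lemma base_nonpar: "{x, y} \<in> Bs \<Longrightarrow> \<not> par x y \<and> x \<noteq> y \<and> x \<in> \<Union>Bs \<and> y \<in> \<Union>Bs"
  using base_ne by (auto simp: par_def)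

lemma circ2: assumes "par x y" "x \<noteq> y" shows "circuit E Bs {x, y}"
proof (rule circuit_intro)
  show "{x, y} \<subseteq> E" using assms NE by (auto simp: par_def)
  show "\<not> indep Bs {x, y}" using indep_pair[OF assms(2)] assms(1) by (simp add: par_def)
  fix c assume "c \<in> {x, y}"
  hence "{x, y} - {c} \<subseteq> {x} \<or> {x, y} - {c} \<subseteq> {y}" by blast
  thus "indep Bs ({x, y} - {c})" using assms(1) unfolding indep_def par_def by blast
qed

lemma circ3: assumes "{x, y} \<in> Bs" "{y, z} \<in> Bs" "{x, z} \<in> Bs" shows "circuit E Bs {x, y, z}"
proof (rule circuit_intro)
  have d: "x \<noteq> y" "y \<noteq> z" "x \<noteq> z" using assms base_ne by blast+
  show "{x, y, z} \<subseteq> E" using assms subE by blast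
  show "\<not> indep Bs {x, y, z}"
  proof
    assume "indep Bs {x, y, z}"
    then obtain B where B: "B \<in> Bs" "{x, y, z} \<subseteq> B" unfolding indep_def by blast
    have "card {x, y, z} \<le> card B" using B finB card_mono by blast
    thus False using B two d by simp
  qed
  fix c assume "c \<in> {x, y, z}"
  hence "{x, y, z} - {c} \<subseteq> {y, z} \<or> {x, y, z} - {c} \<subseteq> {x, z} \<or> {x, y, z} - {c} \<subseteq> {x, y}" by blast
  thus "indep Bs ({x, y, z} - {c})" using assms unfolding indep_def by blast
qed

lemma tri_case:
  assumes pq: "{p, q} \<in> Bs" and qr: "{q, r} \<in> Bs" and pr: "{p, r} \<in> Bs" and c2: "card Bs \<ge> 2"
  shows "borsuk_property E Bs"
proof -
  have pN: "p \<in> \<Union>Bs" "q \<in> \<Union>Bs" "r \<in> \<Union>Bs" using pq qr by blast+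
  have npq: "\<not> par p q" "\<not> par q r" "\<not> par p r" using pq qr pr base_nonpar by blast+
  have two_of: "\<not> (par x p \<and> par x q) \<and> \<not> (par x q \<and> par x r) \<and> \<not> (par x p \<and> par x r)" for x
    using npq par_common by blast
  have rel: "(x, y) \<in> conn_rel E Bs" if x: "x \<in> \<Union>Bs" and y: "y \<in> \<Union>Bs" for x y
  proof (cases "x = y")
    case True
    have "x \<in> E" using x NE by blast
    thus ?thesis using conn_refl[of x E Bs] True by simp
  next
    case False
    show ?thesis
    proof (cases "par x y")
      case True
      have "circuit E Bs {x, y}" using circ2[OF True False] .
      thus ?thesis by (rule conn_circ) simp_all
    next
      case np: False
      have "\<exists>z\<in>{p, q, r}. \<not> par x z \<and> \<not> par y z" using two_of[of x] two_of[of y] by blast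
      then obtain z where z: "z \<in> {p, q, r}" "\<not> par x z" "\<not> par y z" by blast
      have zN: "z \<in> \<Union>Bs" using z pN by blast
      have "{x, y} \<in> Bs" "{y, z} \<in> Bs" "{x, z} \<in> Bs" using nonpar x y zN z np by auto
      from circ3[OF this] show ?thesis by (rule conn_circ) simp_all
    qed
  qed
  have uni: "\<forall>x\<in>\<Union>Bs. conn_rel E Bs `` {x} = \<Union>Bs"
  proof
    fix x assume x: "x \<in> \<Union>Bs"
    show "conn_rel E Bs `` {x} = \<Union>Bs"
    proof
      show "conn_rel E Bs `` {x} \<subseteq> \<Union>Bs" by (rule conn_sub[OF x])
      show "\<Union>Bs \<subseteq> conn_rel E Bs `` {x}" using rel[OF x] by blast
    qed
  qed
  have Nne: "\<Union>Bs \<noteq> {}" using pN by blast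
  show ?thesis
  proof (cases "\<exists>B1\<in>Bs. \<exists>B2\<in>Bs. B1 \<inter> B2 = {}")
    case True
    then obtain B1 B2 where B: "B1 \<in> Bs" "B2 \<in> Bs" "B1 \<inter> B2 = {}" by blast
    have "\<forall>B\<in>Bs. B \<inter> \<Union>Bs \<noteq> {}" using base_pair by blast
    then obtain P where P: "partition_on Bs P" "card P \<le> card (\<Union>Bs)" "\<forall>S\<in>P. diam S < diam Bs"
      using star_part[OF finBs finN _ _ B] two by blast
    show ?thesis by (rule borsuk_from[OF finE c2 NE Nne uni P])
  next
    case False
    have d: "p \<noteq> q" "q \<noteq> r" "p \<noteq> r" using pq qr pr base_ne by blast+
    have "Bs \<subseteq> {{p, q}, {q, r}, {p, r}}"
    proof
      fix B assume B: "B \<in> Bs"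
      then obtain u v where uv: "u \<noteq> v" "B = {u, v}" using base_pair by blast
      have "B \<inter> {p, q} \<noteq> {}" "B \<inter> {q, r} \<noteq> {}" "B \<inter> {p, r} \<noteq> {}" using False B pq qr pr by blast+
      hence I: "{u, v} \<inter> {p, q} \<noteq> {}" "{u, v} \<inter> {q, r} \<noteq> {}" "{u, v} \<inter> {p, r} \<noteq> {}"
        using uv by simp_all
      have "u \<in> {p, q, r}" by (rule tri_in[OF I d])
      moreover have "v \<in> {p, q, r}" by (rule tri_in[OF I[unfolded insert_commute[of u v]] d])
      ultimately show "B \<in> {{p, q}, {q, r}, {p, r}}" unfolding uv(2) using uv(1) by (rule tri_sets)
    qed
    hence "card Bs \<le> card {{p, q}, {q, r}, {p, r}}" by (rule card_mono[rotated]) simp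
    also have "\<dots> \<le> 3" by (rule card3_le)
    also have "3 = card {p, q, r}" using d by simp
    also have "\<dots> \<le> card (\<Union>Bs)" by (rule card_mono[OF finN]) (use pN in blast)
    finally have cB: "card Bs \<le> card (\<Union>Bs)" .
    have ne: "{p, q} \<noteq> {q, r}" using d by (auto simp: doubleton_eq_iff)
    obtain P where P: "partition_on Bs P" "card P = card Bs" "\<forall>S\<in>P. diam S < diam Bs"
      using single_part[OF finBs pq qr ne finB[OF pq] finB[OF qr]] by blast
    show ?thesis by (rule borsuk_from[OF finE c2 NE Nne uni P(1) _ P(3)]) (use P cB in simp)
  qed
qed

lemma two_case:
  assumes ab: "{a, b} \<in> Bs"
    and notri: "\<not> (\<exists>p q r. {p, q} \<in> Bs \<and> {q, r} \<in> Bs \<and> {p, r} \<in> Bs)"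
    and ge: "card {x. par x b} \<le> card {x. par x a}" and c2: "card Bs \<ge> 2"
  shows "borsuk_property E Bs"
proof -
  define A where "A = {x. par x a}"
  have abN: "a \<in> \<Union>Bs" "b \<in> \<Union>Bs" "\<not> par a b" "a \<noteq> b" using base_nonpar[OF ab] by simp_all
  have cover: "par x a \<or> par x b" if "x \<in> \<Union>Bs" for x
  proof (rule ccontr)
    assume "\<not> (par x a \<or> par x b)"
    hence "\<not> par x a" "\<not> par x b" by simp_all
    hence h: "{x, a} \<in> Bs" "{x, b} \<in> Bs" using nonpar[OF that abN(1)] nonpar[OF that abN(2)] by simp_all
    have "\<exists>p q r. {p, q} \<in> Bs \<and> {q, r} \<in> Bs \<and> {p, r} \<in> Bs"
      by (rule exI[of _ x], rule exI[of _ a], rule exI[of _ b]) (simp add: h ab)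
    thus False using notri by simp
  qed
  have AN: "A \<subseteq> \<Union>Bs" unfolding A_def par_def by blast
  have finA: "finite A" using AN finN finite_subset by blast
  have aA: "a \<in> A" unfolding A_def using par_refl abN by blast
  have AE: "A \<subseteq> E" using AN NE by blast
  have uni: "\<forall>x\<in>A. conn_rel E Bs `` {x} = A"
  proof
    fix x assume xA: "x \<in> A"
    hence xa: "par x a" and xN: "x \<in> \<Union>Bs" unfolding A_def par_def by auto
    show "conn_rel E Bs `` {x} = A"
    proof
      show "A \<subseteq> conn_rel E Bs `` {x}"
      proof
        fix y assume yA: "y \<in> A"
        show "y \<in> conn_rel E Bs `` {x}"
        proof (cases "y = x")
          case True
          have "x \<in> E" using xN NE by blast
          thus ?thesis using conn_refl[of x E Bs] True by simp
        next
          case False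
          have "par y a" using yA unfolding A_def by simp
          hence "par x y" using par_trans[OF xa par_sym] by blast
          hence "circuit E Bs {x, y}" using circ2 False by simp
          hence "(x, y) \<in> conn_rel E Bs" by (rule conn_circ) simp_all
          thus ?thesis by simp
        qed
      qed
      show "conn_rel E Bs `` {x} \<subseteq> A"
      proof
        fix z assume zr: "z \<in> conn_rel E Bs `` {x}"
        have zN: "z \<in> \<Union>Bs" using conn_sub[OF xN] zr by blast
        show "z \<in> A"
        proof (rule ccontr)
          assume zA: "z \<notin> A"
          hence zx: "z \<noteq> x" using xA by blast
          then obtain C where C: "circuit E Bs C" "x \<in> C" "z \<in> C" using zr unfolding conn_rel_def by auto
          have nxz: "\<not> par x z"
          proof
            assume "par x z"
            hence "par z a" using par_common xa by blast
            thus False using zA unfolding A_def by simp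
          qed
          hence "{x, z} \<in> Bs" using nonpar xN zN by blast
          hence "indep Bs {x, z}" unfolding indep_def by blast
          moreover have "\<not> indep Bs C" using C unfolding circuit_def by blast
          ultimately have "C \<noteq> {x, z}" by blast
          then obtain w where w: "w \<in> C" "w \<noteq> x" "w \<noteq> z" using C by blast
          have wN: "w \<in> \<Union>Bs" using loop_circuit[OF C(1) w(1)] C(2) w(2) by blast
          have zb: "par z b" using cover[OF zN] zA unfolding A_def by blast
          have indC: "indep Bs D" if "D \<subset> C" for D using C that unfolding circuit_def by blast
          show False
          proof (cases "par w a")
            case True
            hence pwx: "par w x" using par_trans[OF True par_sym[OF xa]] by blast
            have "{w, x} \<subset> C" using w C zx by blast
            hence "indep Bs {w, x}" by (rule indC)
            hence "{w, x} \<in> Bs" using indep_pair w(2) by blast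
            thus False using pwx by (simp add: par_def)
          next
            case False
            hence "par w b" using cover[OF wN] by blast
            hence pwz: "par w z" using par_trans[OF _ par_sym[OF zb]] by blast
            have "{w, z} \<subset> C" using w C zx by blast
            hence "indep Bs {w, z}" by (rule indC)
            hence "{w, z} \<in> Bs" using indep_pair w(3) by blast
            thus False using pwz by (simp add: par_def)
          qed
        qed
      qed
    qed
  qed
  have meets: "\<forall>B\<in>Bs. B \<inter> A \<noteq> {}"
  proof
    fix B assume B: "B \<in> Bs"
    then obtain u v where uv: "u \<noteq> v" "B = {u, v}" using base_pair by blast
    have nuv: "\<not> par u v" "u \<in> \<Union>Bs" "v \<in> \<Union>Bs" using base_nonpar[of u v] B uv by simp_all
    show "B \<inter> A \<noteq> {}"
    proof
      assume "B \<inter> A = {}"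
      hence "\<not> par u a" "\<not> par v a" using uv unfolding A_def by auto
      hence "par u b" "par v b" using cover nuv by blast+
      hence "par u v" using par_trans[OF _ par_sym] by blast
      thus False using nuv by blast
    qed
  qed
  have Ane: "A \<noteq> {}" using aA by blast
  show ?thesis
  proof (cases "\<exists>B1\<in>Bs. \<exists>B2\<in>Bs. B1 \<inter> B2 = {}")
    case True
    then obtain B1 B2 where B: "B1 \<in> Bs" "B2 \<in> Bs" "B1 \<inter> B2 = {}" by blast
    obtain P where P: "partition_on Bs P" "card P \<le> card A" "\<forall>S\<in>P. diam S < diam Bs"
      using star_part[OF finBs finA _ meets B] two by blast
    show ?thesis by (rule borsuk_from[OF finE c2 AE Ane uni P])
  next
    case False
    have bcls: "{x. par x b} = {b}"
    proof (rule ccontr)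
      assume "{x. par x b} \<noteq> {b}"
      moreover have "b \<in> {x. par x b}" using par_refl abN by blast
      ultimately obtain b2 where b2: "par b2 b" "b2 \<noteq> b" by blast
      have "{b, b2} \<subseteq> {x. par x b}" using b2 par_refl abN by blast
      moreover have "finite {x. par x b}" using finN by (rule finite_subset[rotated]) (auto simp: par_def)
      ultimately have "card {b, b2} \<le> card {x. par x b}" by (rule card_mono[rotated])
      hence "2 \<le> card A" using b2 ge unfolding A_def by simp
      then obtain a1 a2 where "a1 \<in> A" "a2 \<in> A" "a1 \<noteq> a2" by (rule two_elems)
      then obtain a2 where a2: "a2 \<in> A" "a2 \<noteq> a" by blast
      have pa2: "par a2 a" using a2 unfolding A_def by blast
      have N2: "a2 \<in> \<Union>Bs" "b2 \<in> \<Union>Bs" using pa2 b2(1) unfolding par_def by simp_all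
      have "\<not> par a2 b2"
      proof
        assume "par a2 b2"
        hence "par a b2" using par_trans[OF par_sym[OF pa2]] by blast
        hence "par a b" using par_trans b2(1) by blast
        thus False using abN by blast
      qed
      hence B2: "{a2, b2} \<in> Bs" using nonpar N2 by blast
      have "a \<noteq> b2" using b2 abN by blast
      moreover have "b \<noteq> a2"
      proof
        assume "b = a2"
        hence "par b a" using pa2 by simp
        thus False using abN par_sym by blast
      qed
      ultimately have "{a, b} \<inter> {a2, b2} = {}" using a2 b2 by blast
      thus False using False ab B2 by blast
    qed
    have "Bs \<subseteq> (\<lambda>x. {x, b}) ` A"
    proof
      fix B assume B: "B \<in> Bs"
      then obtain u v where uv: "u \<noteq> v" "B = {u, v}" using base_pair by blast
      have nuv: "\<not> par u v" "u \<in> \<Union>Bs" "v \<in> \<Union>Bs" using base_nonpar[of u v] B uv by simp_all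
      have "B \<inter> A \<noteq> {}" using meets B by (rule bspec)
      hence inA: "u \<in> A \<or> v \<in> A" using uv by auto
      have notboth: "\<not> (u \<in> A \<and> v \<in> A)"
      proof
        assume "u \<in> A \<and> v \<in> A"
        hence "par u a" "par v a" unfolding A_def by auto
        hence "par u v" using par_trans[of u a v] par_sym[of v a] by blast
        thus False using nuv by blast
      qed
      show "B \<in> (\<lambda>x. {x, b}) ` A"
      proof (cases "u \<in> A")
        case True
        hence "v \<notin> A" using notboth by blast
        hence "par v b" using cover[OF nuv(3)] unfolding A_def by simp
        hence "v \<in> {x. par x b}" by simp
        hence "v = b" unfolding bcls by simp
        hence "B = (\<lambda>x. {x, b}) u" using uv by simp
        thus ?thesis using True by (rule image_eqI)
      next
        case False
        hence "v \<in> A" using inA by blast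
        have "par u b" using cover[OF nuv(2)] False unfolding A_def by simp
        hence "u \<in> {x. par x b}" by simp
        hence "u = b" unfolding bcls by simp
        hence "B = (\<lambda>x. {x, b}) v" using uv by (simp add: insert_commute)
        thus ?thesis using \<open>v \<in> A\<close> by (rule image_eqI)
      qed
    qed
    hence "card Bs \<le> card ((\<lambda>x. {x, b}) ` A)" by (rule card_mono[rotated]) (use finA in simp)
    hence cB: "card Bs \<le> card A" using card_image_le[OF finA, of "\<lambda>x. {x, b}"] by linarith
    obtain B1 B2 where B12: "B1 \<in> Bs" "B2 \<in> Bs" "B1 \<noteq> B2" using two_elems[OF c2] by blast
    obtain P where P: "partition_on Bs P" "card P = card Bs" "\<forall>S\<in>P. diam S < diam Bs"
      using single_part[OF finBs B12 finB[OF B12(1)] finB[OF B12(2)]] by blast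
    show ?thesis by (rule borsuk_from[OF finE c2 AE Ane uni P(1) _ P(3)]) (use P cB in simp)
  qed
qed

end

theorem theorem2:
  fixes E :: "'a set" and Bs :: "'a set set"
  assumes "matroid E Bs"
    and "card Bs \<ge> 2"
    and "rank Bs \<le> 2"
  shows "borsuk_property E Bs"
proof -
  have rk: "\<forall>B\<in>Bs. card B = rank Bs" using rank_card assms(1) by blast
  have "rank Bs \<noteq> 0"
  proof
    assume "rank Bs = 0"
    have finE: "finite E" using assms(1) matroid_def by auto
    have "Bs \<subseteq> {{}}"
    proof
      fix B assume B: "B \<in> Bs"
      hence "finite B" using assms(1) finE unfolding matroid_def by (meson finite_subset)
      moreover have "card B = 0" using rk B \<open>rank Bs = 0\<close> by simp
      ultimately show "B \<in> {{}}" by simp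
    qed
    hence "card Bs \<le> card {{}::'a set}" by (rule card_mono[rotated]) simp
    thus False using assms(2) by simp
  qed
  hence "rank Bs = 1 \<or> rank Bs = 2" using assms(3) by linarith
  thus ?thesis
  proof (elim disjE)
    assume r1: "rank Bs = 1"
    have "\<forall>B\<in>Bs. card B = 1" using rk r1 by simp
    show ?thesis by (rule rank1_case[OF assms(1) \<open>\<forall>B\<in>Bs. card B = 1\<close> assms(2)])
  next
    assume r2: "rank Bs = 2"
    interpret rk2 E Bs using assms(1) rk r2 by unfold_locales simp_all
    show ?thesis
    proof (cases "\<exists>p q r. {p, q} \<in> Bs \<and> {q, r} \<in> Bs \<and> {p, r} \<in> Bs")
      case True
      then obtain p q r where "{p, q} \<in> Bs" "{q, r} \<in> Bs" "{p, r} \<in> Bs" by blast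
      thus ?thesis using assms(2) by (rule tri_case)
    next
      case False
      have "Bs \<noteq> {}" using assms(1) unfolding matroid_def by blast
      then obtain B where "B \<in> Bs" by blast
      then obtain a b where ab: "{a, b} \<in> Bs" using base_pair by blast
      show ?thesis
      proof (cases "card {x. par x b} \<le> card {x. par x a}")
        case True show ?thesis by (rule two_case[OF ab False True assms(2)])
      next
        case nle: False
        have ba: "{b, a} \<in> Bs" using ab by (simp add: insert_commute)
        have "card {x. par x a} \<le> card {x. par x b}" using nle by simp
        show ?thesis by (rule two_case[OF ba False \<open>card {x. par x a} \<le> card {x. par x b}\<close> assms(2)])
      qed
    qed
  qed
qed

end
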